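(* Assume: - the strengthened triangle inequality under the square holds with constant $a_0$; - the forms $\overline a_{l,i}$ provide a positive semi-definite splitting with constant $b_0$; - the subspaces are locally stable with constant $C_1$; - the subspaces admit a level-wise coloring with $k_0$ colors. Then the operator $\mathcal P$ of parallel multilevel subspace correction satisfies $$\kappa_2(\mathcal P)\le C^L\Bigl(1+\frac{b_0C_1}{C-1}\Bigr)(1+k_0L),\qquad C=2(1+a_0b_0C_1).$$
   Context: Let $V_h$ be a finite-dimensional real vector space with a symmetric positive definite bilinear form $a_h$, and $\|v\|_{a_h}=\sqrt{a_h(v,v)}$. Let $L\ge1$ and let $V_{h,0}\subseteq V_{h,1}\subseteq\cdots\subseteq V_{h,L}=V_h$ be nested subspaces. For each level $1\le l\le L$ let $P_l\in\mathbb N$ and let $V_{h,l,i}\subseteq V_{h,l}$, $i=1,\dots,P_l$, be subspaces. For each such $(l,i)$ let $\overline V_{h,l,i}$ be a finite-dimensional real vector space, $r_{l,i}:V_{h,l}\to\overline V_{h,l,i}$ a linear map, and $\overline a_{l,i}$ a symmetric positive semi-definite bilinear form on $\overline V_{h,l,i}$ with seminorm $|w|_{\overline a_{l,i}}=\sqrt{\overline a_{l,i}(w,w)}$. Let $\mathcal P_0:V_h\to V_{h,0}$ and $\mathcal P_{l,i}:V_h\to V_{h,l,i}$ be the $a_h$-orthogonal projections. Set $\mathcal P=\mathcal P_0+\sum_{l=1}^L\sum_{i=1}^{P_l}\mathcal P_{l,i}$ and $\kappa_2(\mathcal P)=\lambda_{\max}(\mathcal P)/\lambda_{\min}(\mathcal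 P)$. Strengthened triangle inequality under the square with constant $a_0>0$: for every $l$ and every choice of $v_{l,i}\in V_{h,l,i}$, $$\Bigl\|\sum_{i}v_{l,i}\Bigr\|_{a_h}^2\le a_0\sum_i\|v_{l,i}\|_{a_h}^2.$$ Positive semi-definite splitting with constant $b_0>0$: for every $l$ and all $v_l\in V_{h,l}$, $$\sum_{i}|r_{l,i}v_l|_{\overline a_{l,i}}^2\le b_0\|v_l\|_{a_h}^2.$$ Local stability with constant $C_1>0$: for every $1\le l\le L$ and every $v_l\in V_{h,l}$ there is a decomposition $v_l=v_{l-1}+\sum_{i}v_{l,i}$ with $v_{l-1}\in V_{h,l-1}$ and $v_{l,i}\in V_{h,l,i}$ such that $\|v_{l,i}\|_{a_h}^2\le C_1|r_{l,i}v_l|_{\overline a_{l,i}}^2$ for all $i$. Level-wise coloring with $k_0$ colors: for each $l$ there is a map $c_l:\{1,\dots,P_l\}\to\{1,\dots,k_0\}$ such that $i\ne j$ and $c_l(i)=c_l(j)$ imply $a_h(v_i,v_j)=0$ for all $v_i\in V_{h,l,i}$ and $v_j\in V_{h,l,j}$. All constants are independent of $l$. *)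

theory Defs
  imports "HOL-Analysis.Analysis"
begin

definition a_proj :: "('v::real_vector \<Rightarrow> 'v \<Rightarrow> real) \<Rightarrow> 'v set \<Rightarrow> 'v \<Rightarrow> 'v" where
  "a_proj a U v = (THE u. u \<in> U \<and> (\<forall>w\<in>U. a (v - u) w = 0))"

definition eigvals :: "('v::real_vector \<Rightarrow> 'v) \<Rightarrow> real set" where
  "eigvals f = {t. \<exists>v. v \<noteq> 0 \<and> f v = t *\<^sub>R v}"

definition lambda_max :: "('v::real_vector \<Rightarrow> 'v) \<Rightarrow> real" where
  "lambda_max f = Max (eigvals f)"

definition lambda_min :: "('v::real_vector \<Rightarrow> 'v) \<Rightarrow> real" where
  "lambda_min f = Min (eigvals f)"

definition kappa2 :: "('v::real_vector \<Rightarrow> 'v) \<Rightarrow> real" where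
  "kappa2 f = lambda_max f / lambda_min f"

end

theory Submission
  imports Defs
begin

lemma Max_Min_degen: "\<not> (finite A \<and> A \<noteq> {}) \<Longrightarrow> Max (A::real set) = Min A"
  unfolding Max.eq_fold' Min.eq_fold' by auto

locale aform =
  fixes a :: "'v::euclidean_space \<Rightarrow> 'v \<Rightarrow> real"
  assumes bil: "bilinear a" and sym: "\<And>u v. a u v = a v u"
    and pos: "\<And>v. v \<noteq> 0 \<Longrightarrow> a v v > 0"
begin

lemma nonneg: "a v v \<ge> 0"
  using pos[of v] bilinear_lzero[OF bil] by (cases "v = 0") auto

lemma ladd: "a (x + y) z = a x z + a y z" by (rule bilinear_ladd[OF bil])
lemma radd: "a x (y + z) = a x y + a x z" by (rule bilinear_radd[OF bil])
lemma lsub: "a (x - y) z = a x z - a y z" by (rule bilinear_lsub[OF bil])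
lemma rsub: "a z (x - y) = a z x - a z y" by (rule bilinear_rsub[OF bil])
lemma lmul: "a (c *\<^sub>R x) y = c * a x y" using bilinear_lmul[OF bil] by simp
lemma rmul: "a x (c *\<^sub>R y) = c * a x y" using bilinear_rmul[OF bil] by simp
lemma lzero: "a 0 y = 0" using bilinear_lzero[OF bil] by simp
lemma rzero: "a x 0 = 0" using bilinear_rzero[OF bil] by simp

lemma lsum: "a (sum f S) y = (\<Sum>i\<in>S. a (f i) y)"
proof -
  interpret l: linear "\<lambda>x. a x y" using bil by (simp add: bilinear_def)
  show ?thesis by (simp add: l.sum)
qed

lemma rsum: "a y (sum f S) = (\<Sum>i\<in>S. a y (f i))"
proof -
  interpret l: linear "\<lambda>x. a y x" using bil by (simp add: bilinear_def)
  show ?thesis by (simp add: l.sum)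
qed

lemma orth_span:
  assumes "\<forall>w\<in>S. a z w = 0" and "w \<in> span S"
  shows "a z w = 0"
proof -
  have sub: "subspace {w. a z w = 0}"
    by (auto simp: subspace_def rzero radd rmul)
  show ?thesis using span_induct[OF assms(2), of "\<lambda>w. a z w = 0"] sub assms(1) by auto
qed

lemma proj_exists_fin:
  assumes "finite S"
  shows "\<forall>v. \<exists>u\<in>span S. \<forall>w\<in>span S. a (v - u) w = 0"
  using assms
proof (induction S rule: finite_induct)
  case empty
  then show ?case by (auto simp: rzero)
next
  case (insert x S)
  from insert.IH obtain p where p: "\<And>v. p v \<in> span S" "\<And>v w. w \<in> span S \<Longrightarrow> a (v - p v) w = 0"
    by metis
  define y where "y = x - p x"
  have yorth: "a y w = 0" if "w \<in> span S" for w
    using p(2)[OF that, of x] by (simp add: y_def)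
  show ?case
  proof
    fix v
    show "\<exists>u\<in>span (insert x S). \<forall>w\<in>span (insert x S). a (v - u) w = 0"
    proof (cases "y = 0")
      case True
      then have xs: "x \<in> span S" using p(1)[of x] by (simp add: y_def)
      have "\<forall>w\<in>span (insert x S). a (v - p v) w = 0"
        using p(2) span_redundant[OF xs] by auto
      moreover have "p v \<in> span (insert x S)"
        using p(1) span_mono[of S "insert x S"] by auto
      ultimately show ?thesis by blast
    next
      case False
      define u where "u = p v + (a v y / a y y) *\<^sub>R y"
      have ayy: "a y y > 0" using pos False by auto
      have ys: "y \<in> span (insert x S)"
        unfolding y_def
        by (meson p(1) span_base span_diff span_mono insertI1 subset_insertI subsetD)
      have us: "u \<in> span (insert x S)" unfolding u_def
        by (meson p(1) span_add span_scale ys span_mono subset_insertI subsetD)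
      have oS: "a (v - u) w = 0" if "w \<in> span S" for w
        using p(2)[OF that, of v] yorth[OF that]
        by (simp add: u_def lsub ladd lmul algebra_simps diff_diff_eq[symmetric] del: diff_diff_eq)
      have "a (v - u) y = a (v - p v) y - a v y"
        using ayy by (simp add: u_def lsub ladd lmul algebra_simps)
      also have "a (v - p v) y = a v y - a (p v) y" by (simp add: lsub)
      also have "a (p v) y = 0" using yorth[OF p(1)[of v]] sym by metis
      finally have oy: "a (v - u) y = 0" by simp
      have ox: "a (v - u) x = 0"
      proof -
        have "x = p x + y" by (simp add: y_def)
        then have "a (v - u) x = a (v - u) (p x) + a (v - u) y" by (metis radd)
        then show ?thesis using oS[OF p(1)[of x]] oy by simp
      qed
      have "\<forall>w\<in>span (insert x S). a (v - u) w = 0"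
      proof
        fix w assume "w \<in> span (insert x S)"
        moreover have "\<forall>w\<in>insert x S. a (v - u) w = 0"
          using ox oS span_base by auto
        ultimately show "a (v - u) w = 0" using orth_span by blast
      qed
      then show ?thesis using us by blast
    qed
  qed
qed

lemma proj_prop:
  assumes "subspace U"
  shows "a_proj a U v \<in> U \<and> (\<forall>w\<in>U. a (v - a_proj a U v) w = 0)"
proof -
  obtain B where B: "finite B" "span B = U"
    by (metis assms basis_exists finiteI_independent span_subspace)
  obtain u where u: "u \<in> U" "\<forall>w\<in>U. a (v - u) w = 0"
    using proj_exists_fin[OF B(1)] B(2) by blast
  have uniq: "u' = u" if "u' \<in> U" "\<forall>w\<in>U. a (v - u') w = 0" for u'
  proof (rule ccontr)
    assume ne: "u' \<noteq> u"
    have d: "u - u' \<in> U" using that(1) u(1) assms subspace_diff by blast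
    have "a (u - u') (u - u') = a (v - u') (u - u') - a (v - u) (u - u')"
      by (simp add: lsub)
    also have "\<dots> = 0" using that(2) u(2) d by simp
    finally show False using pos[of "u - u'"] ne by simp
  qed
  have "\<exists>!u. u \<in> U \<and> (\<forall>w\<in>U. a (v - u) w = 0)" using u uniq by blast
  from theI'[OF this] show ?thesis unfolding a_proj_def by blast
qed

lemma proj_sq:
  assumes "subspace U"
  shows "a (a_proj a U v) v = a (a_proj a U v) (a_proj a U v)"
proof -
  let ?p = "a_proj a U v"
  have "a (v - ?p) ?p = 0" using proj_prop[OF assms] by blast
  then have "a v ?p = a ?p ?p" by (simp add: lsub)
  then show ?thesis by (metis sym)
qed

lemma par: "a (x - y) (x - y) + a (x + y) (x + y) = 2 * a x x + 2 * a y y"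
  by (simp add: lsub rsub ladd radd sym[of y x])

lemma young: assumes "e > 0" shows "2 * e * a x y \<le> e^2 * a x x + a y y"
proof -
  have "0 \<le> a (e *\<^sub>R x - y) (e *\<^sub>R x - y)" by (rule nonneg)
  also have "\<dots> = e^2 * a x x - 2 * e * a x y + a y y"
    by (simp add: lsub rsub lmul rmul sym[of y x] power2_eq_square algebra_simps)
  finally show ?thesis by simp
qed

lemma class_bound:
  assumes "finite J" and orth: "\<And>i j. i \<in> J \<Longrightarrow> j \<in> J \<Longrightarrow> i \<noteq> j \<Longrightarrow> a (p i) (p j) = 0"
    and pr: "\<And>i. i \<in> J \<Longrightarrow> a (p i) v = a (p i) (p i)"
  shows "(\<Sum>i\<in>J. a (p i) (p i)) \<le> a v v"
proof -
  define W where "W = (\<Sum>i\<in>J. p i)"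
  define s where "s = (\<Sum>i\<in>J. a (p i) (p i))"
  have "a W W = (\<Sum>i\<in>J. a (p i) W)" by (simp add: W_def lsum)
  also have "\<dots> = (\<Sum>i\<in>J. \<Sum>j\<in>J. a (p i) (p j))" by (simp add: W_def rsum)
  also have "\<dots> = s" unfolding s_def
  proof (rule sum.cong[OF refl])
    fix i assume i: "i \<in> J"
    have "(\<Sum>j\<in>J. a (p i) (p j)) = (\<Sum>j\<in>J. if j = i then a (p i) (p i) else 0)"
      by (rule sum.cong) (auto simp: orth i)
    also have "\<dots> = a (p i) (p i)" using assms(1) i by simp
    finally show "(\<Sum>j\<in>J. a (p i) (p j)) = a (p i) (p i)" .
  qed
  finally have WW: "a W W = s" .
  have Wv: "a W v = s" by (simp add: W_def s_def lsum pr)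
  have "0 \<le> a (v - W) (v - W)" by (rule nonneg)
  also have "\<dots> = a v v - 2 * a W v + a W W" by (simp add: lsub rsub sym[of v W])
  finally show ?thesis using WW Wv s_def by simp
qed

lemma level_bound:
  assumes "finite I" and col: "\<And>i. i \<in> I \<Longrightarrow> c i \<in> {1..k0::nat}"
    and orth: "\<And>i j. i \<in> I \<Longrightarrow> j \<in> I \<Longrightarrow> i \<noteq> j \<Longrightarrow> c i = c j \<Longrightarrow> a (p i) (p j) = 0"
    and pr: "\<And>i. i \<in> I \<Longrightarrow> a (p i) v = a (p i) (p i)"
  shows "(\<Sum>i\<in>I. a (p i) (p i)) \<le> real k0 * a v v"
proof -
  have "(\<Sum>i\<in>I. a (p i) (p i)) = (\<Sum>k\<in>c ` I. \<Sum>i\<in>{i\<in>I. c i = k}. a (p i) (p i))"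
    by (rule sum.image_gen[OF assms(1)])
  also have "\<dots> \<le> (\<Sum>k\<in>c ` I. a v v)"
    by (rule sum_mono, rule class_bound) (use assms(1) orth pr in auto)
  also have "\<dots> = real (card (c ` I)) * a v v" by simp
  also have "\<dots> \<le> real k0 * a v v"
  proof -
    have "c ` I \<subseteq> {1..k0}" using col by auto
    then have "card (c ` I) \<le> k0" using card_mono[of "{1..k0}"] by fastforce
    then show ?thesis by (intro mult_right_mono) (auto simp: nonneg)
  qed
  finally show ?thesis .
qed

lemma lower_bound:
  assumes "finite J" and xU: "\<And>j. j \<in> J \<Longrightarrow> x j \<in> U j"
    and orth: "\<And>j w. j \<in> J \<Longrightarrow> w \<in> U j \<Longrightarrow> a (v - p j) w = 0"
    and dec: "v = (\<Sum>j\<in>J. x j)"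
    and stab: "(\<Sum>j\<in>J. a (x j) (x j)) \<le> K * a v v" and K: "K > 0"
  shows "a v v \<le> K * (\<Sum>j\<in>J. a (p j) (p j))"
proof -
  have "a v v = (\<Sum>j\<in>J. a (x j) v)" by (subst (1) dec) (simp add: lsum)
  also have "\<dots> = (\<Sum>j\<in>J. a (x j) (p j))"
  proof (rule sum.cong[OF refl])
    fix j assume j: "j \<in> J"
    have "a (v - p j) (x j) = 0" using orth[OF j xU[OF j]] .
    then show "a (x j) v = a (x j) (p j)" by (simp add: lsub sym[of "x j"])
  qed
  finally have e1: "a v v = (\<Sum>j\<in>J. a (x j) (p j))" .
  have "2 * (1/K) * a v v = (\<Sum>j\<in>J. 2 * (1/K) * a (x j) (p j))"
    by (simp add: e1 sum_distrib_left)
  also have "\<dots> \<le> (\<Sum>j\<in>J. (1/K)^2 * a (x j) (x j) + a (p j) (p j))"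
    by (rule sum_mono, rule young) (use K in simp)
  also have "\<dots> = (1/K)^2 * (\<Sum>j\<in>J. a (x j) (x j)) + (\<Sum>j\<in>J. a (p j) (p j))"
    by (simp add: sum.distrib sum_distrib_left)
  also have "\<dots> \<le> (1/K)^2 * (K * a v v) + (\<Sum>j\<in>J. a (p j) (p j))"
    by (intro add_right_mono mult_left_mono stab) simp
  finally have "2 / K * a v v \<le> a v v / K + (\<Sum>j\<in>J. a (p j) (p j))"
    using K by (simp add: power2_eq_square field_simps)
  then have "a v v / K \<le> (\<Sum>j\<in>J. a (p j) (p j))" by (simp add: field_simps)
  then show ?thesis using K by (simp add: field_simps)
qed

end

theorem theorem3p11:
  fixes a :: "'v::euclidean_space \<Rightarrow> 'v \<Rightarrow> real"
    and L :: nat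
    and V :: "nat \<Rightarrow> 'v set"
    and P :: "nat \<Rightarrow> nat"
    and Vs :: "nat \<Rightarrow> nat \<Rightarrow> 'v set"
    and r :: "nat \<Rightarrow> nat \<Rightarrow> 'v \<Rightarrow> 'w::euclidean_space"
    and abar :: "nat \<Rightarrow> nat \<Rightarrow> 'w \<Rightarrow> 'w \<Rightarrow> real"
    and a0 b0 C1 :: real
    and k0 :: nat
    and c :: "nat \<Rightarrow> nat \<Rightarrow> nat"
  assumes a_bil: "bilinear a"
    and a_sym: "\<And>u v. a u v = a v u"
    and a_pos: "\<And>v. v \<noteq> 0 \<Longrightarrow> a v v > 0"
    and L_ge: "L \<ge> 1"
    and V_sub: "\<And>l. l \<le> L \<Longrightarrow> subspace (V l)"
    and V_nested: "\<And>l. l < L \<Longrightarrow> V l \<subseteq> V (Suc l)"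
    and V_top: "V L = UNIV"
    and P_pos: "\<And>l. 1 \<le> l \<Longrightarrow> l \<le> L \<Longrightarrow> P l \<ge> 1"
    and Vs_sub: "\<And>l i. 1 \<le> l \<Longrightarrow> l \<le> L \<Longrightarrow> i \<in> {1..P l} \<Longrightarrow>
                   subspace (Vs l i) \<and> Vs l i \<subseteq> V l"
    and r_lin: "\<And>l i x y t. 1 \<le> l \<Longrightarrow> l \<le> L \<Longrightarrow> i \<in> {1..P l} \<Longrightarrow>
                   x \<in> V l \<Longrightarrow> y \<in> V l \<Longrightarrow>
                   r l i (x + y) = r l i x + r l i y \<and> r l i (t *\<^sub>R x) = t *\<^sub>R r l i x"
    and abar_bil: "\<And>l i. 1 \<le> l \<Longrightarrow> l \<le> L \<Longrightarrow> i \<in> {1..P l} \<Longrightarrow> bilinear (abar l i)"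
    and abar_sym: "\<And>l i x y. 1 \<le> l \<Longrightarrow> l \<le> L \<Longrightarrow> i \<in> {1..P l} \<Longrightarrow>
                   abar l i x y = abar l i y x"
    and abar_psd: "\<And>l i x. 1 \<le> l \<Longrightarrow> l \<le> L \<Longrightarrow> i \<in> {1..P l} \<Longrightarrow> abar l i x x \<ge> 0"
    and a0_pos: "a0 > 0" and b0_pos: "b0 > 0" and C1_pos: "C1 > 0"
    and STIL: "\<And>l vs. 1 \<le> l \<Longrightarrow> l \<le> L \<Longrightarrow> (\<forall>i\<in>{1..P l}. vs i \<in> Vs l i) \<Longrightarrow>
                 a (\<Sum>i\<in>{1..P l}. vs i) (\<Sum>i\<in>{1..P l}. vs i)
                   \<le> a0 * (\<Sum>i\<in>{1..P l}. a (vs i) (vs i))"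
    and PSD_split: "\<And>l v. 1 \<le> l \<Longrightarrow> l \<le> L \<Longrightarrow> v \<in> V l \<Longrightarrow>
                 (\<Sum>i\<in>{1..P l}. abar l i (r l i v) (r l i v)) \<le> b0 * a v v"
    and loc_stab: "\<And>l v. 1 \<le> l \<Longrightarrow> l \<le> L \<Longrightarrow> v \<in> V l \<Longrightarrow>
                 \<exists>v0 vs. v0 \<in> V (l - 1) \<and> (\<forall>i\<in>{1..P l}. vs i \<in> Vs l i)
                   \<and> v = v0 + (\<Sum>i\<in>{1..P l}. vs i)
                   \<and> (\<forall>i\<in>{1..P l}. a (vs i) (vs i) \<le> C1 * abar l i (r l i v) (r l i v))"
    and coloring: "\<And>l. 1 \<le> l \<Longrightarrow> l \<le> L \<Longrightarrow>
                 (\<forall>i\<in>{1..P l}. c l i \<in> {1..k0}) \<and>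
                 (\<forall>i\<in>{1..P l}. \<forall>j\<in>{1..P l}. i \<noteq> j \<longrightarrow> c l i = c l j \<longrightarrow>
                    (\<forall>x\<in>Vs l i. \<forall>y\<in>Vs l j. a x y = 0))"
  shows "kappa2 (\<lambda>v. a_proj a (V 0) v
                   + (\<Sum>l\<in>{1..L}. \<Sum>i\<in>{1..P l}. a_proj a (Vs l i) v))
         \<le> (2 * (1 + a0 * b0 * C1)) ^ L
            * (1 + b0 * C1 / (2 * (1 + a0 * b0 * C1) - 1))
            * (1 + real k0 * real L)"
  proof -
  interpret A: aform a using a_bil a_sym a_pos by unfold_locales auto
  define C where "C = 2 * (1 + a0 * b0 * C1)"
  have abc: "a0 * b0 * C1 > 0" using a0_pos b0_pos C1_pos by simp
  have bc: "b0 * C1 > 0" using b0_pos C1_pos by simp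
  have Cgt: "C > 1" using abc by (simp add: C_def)
  define B where "B l = C ^ l + b0 * C1 * (C ^ l - 1) / (C - 1)" for l :: nat
  have Cl: "C ^ l \<ge> 1" for l :: nat using Cgt by simp
  have Bnn: "B l \<ge> C ^ l" for l
    using Cl[of l] Cgt bc by (simp add: B_def)
  have Bsuc: "B (Suc l) = C * B l + b0 * C1" for l
    using Cgt by (simp add: B_def field_simps)
  have dec: "\<And>v. l \<le> L \<Longrightarrow> v \<in> V l \<Longrightarrow> \<exists>v0 w. v0 \<in> V 0
      \<and> (\<forall>l'\<in>{1..l}. \<forall>i\<in>{1..P l'}. w l' i \<in> Vs l' i)
      \<and> v = v0 + (\<Sum>l'\<in>{1..l}. \<Sum>i\<in>{1..P l'}. w l' i)
      \<and> a v0 v0 + (\<Sum>l'\<in>{1..l}. \<Sum>i\<in>{1..P l'}. a (w l' i) (w l' i)) \<le> B l * a v v" for l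
  proof (induction l)
    case 0
    then show ?case by (intro exI[of _ v] exI) (simp add: B_def)
  next
    case (Suc l)
    have lL: "l \<le> L" using Suc.prems by simp
    obtain v1 vs where v1: "v1 \<in> V l" and vsU: "\<forall>i\<in>{1..P (Suc l)}. vs i \<in> Vs (Suc l) i"
      and vdec: "v = v1 + (\<Sum>i\<in>{1..P (Suc l)}. vs i)"
      and vsb: "\<forall>i\<in>{1..P (Suc l)}. a (vs i) (vs i) \<le> C1 * abar (Suc l) i (r (Suc l) i v) (r (Suc l) i v)"
      using loc_stab[of "Suc l" v] Suc.prems by auto
    obtain v0 w where v0: "v0 \<in> V 0" and wU: "\<forall>l'\<in>{1..l}. \<forall>i\<in>{1..P l'}. w l' i \<in> Vs l' i"
      and wdec: "v1 = v0 + (\<Sum>l'\<in>{1..l}. \<Sum>i\<in>{1..P l'}. w l' i)"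
      and wb: "a v0 v0 + (\<Sum>l'\<in>{1..l}. \<Sum>i\<in>{1..P l'}. a (w l' i) (w l' i)) \<le> B l * a v1 v1"
      using Suc.IH[OF lL v1] by blast
    define w' where "w' = w(Suc l := vs)"
    define S where "S = (\<Sum>i\<in>{1..P (Suc l)}. vs i)"
    have sv: "(\<Sum>i\<in>{1..P (Suc l)}. a (vs i) (vs i)) \<le> C1 * b0 * a v v"
    proof -
      have "(\<Sum>i\<in>{1..P (Suc l)}. a (vs i) (vs i))
          \<le> (\<Sum>i\<in>{1..P (Suc l)}. C1 * abar (Suc l) i (r (Suc l) i v) (r (Suc l) i v))"
        by (rule sum_mono) (use vsb in auto)
      also have "\<dots> = C1 * (\<Sum>i\<in>{1..P (Suc l)}. abar (Suc l) i (r (Suc l) i v) (r (Suc l) i v))"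
        by (simp add: sum_distrib_left)
      also have "\<dots> \<le> C1 * (b0 * a v v)"
        using PSD_split[of "Suc l" v] Suc.prems C1_pos by (intro mult_left_mono) auto
      finally show ?thesis by simp
    qed
    have aSS: "a S S \<le> a0 * (C1 * b0 * a v v)"
    proof -
      have "a S S \<le> a0 * (\<Sum>i\<in>{1..P (Suc l)}. a (vs i) (vs i))"
        unfolding S_def using STIL[of "Suc l" vs] Suc.prems vsU by auto
      also have "\<dots> \<le> a0 * (C1 * b0 * a v v)" using sv a0_pos by (intro mult_left_mono) auto
      finally show ?thesis .
    qed
    have av1: "a v1 v1 \<le> C * a v v"
    proof -
      have "v1 = v - S" using vdec S_def by simp
      then have "a v1 v1 = 2 * a v v + 2 * a S S - a (v + S) (v + S)"
        using A.par[of v S] by simp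
      also have "\<dots> \<le> 2 * a v v + 2 * a S S" using A.nonneg[of "v + S"] by simp
      also have "\<dots> \<le> C * a v v" using aSS by (simp add: C_def algebra_simps)
      finally show ?thesis .
    qed
    have eqw: "(\<Sum>l'\<in>{1..l}. g (w' l')) = (\<Sum>l'\<in>{1..l}. g (w l'))" for g :: "(nat \<Rightarrow> 'v) \<Rightarrow> 'b::comm_monoid_add"
      by (rule sum.cong) (auto simp: w'_def)
    show ?case
    proof (intro exI[of _ v0] exI[of _ w'] conjI)
      show "v0 \<in> V 0" by (rule v0)
      show "\<forall>l'\<in>{1..Suc l}. \<forall>i\<in>{1..P l'}. w' l' i \<in> Vs l' i"
        using wU vsU by (auto simp: w'_def)
      show "v = v0 + (\<Sum>l'\<in>{1..Suc l}. \<Sum>i\<in>{1..P l'}. w' l' i)"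
        using eqw[of "\<lambda>f. \<Sum>i\<in>{1..P _}. f i"] vdec wdec
        by (simp add: w'_def eqw[of "\<lambda>f. \<Sum>i\<in>{1..P _}. f i"] add.assoc)
      have "a v0 v0 + (\<Sum>l'\<in>{1..Suc l}. \<Sum>i\<in>{1..P l'}. a (w' l' i) (w' l' i))
          = (a v0 v0 + (\<Sum>l'\<in>{1..l}. \<Sum>i\<in>{1..P l'}. a (w l' i) (w l' i)))
            + (\<Sum>i\<in>{1..P (Suc l)}. a (vs i) (vs i))"
        by (simp add: w'_def eqw add.assoc)
      also have "\<dots> \<le> B l * a v1 v1 + C1 * b0 * a v v" using wb sv by simp
      also have "\<dots> \<le> B l * (C * a v v) + C1 * b0 * a v v"
        using av1 Bnn[of l] Cl[of l] by (intro add_right_mono mult_left_mono) auto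
      also have "\<dots> = B (Suc l) * a v v" by (simp add: Bsuc algebra_simps)
      finally show "a v0 v0 + (\<Sum>l'\<in>{1..Suc l}. \<Sum>i\<in>{1..P l'}. a (w' l' i) (w' l' i)) \<le> B (Suc l) * a v v" .
    qed
  qed
  define K0 where "K0 = B L"
  have K0pos: "K0 > 0" using Bnn[of L] Cl[of L] by (simp add: K0_def)
  have K0le: "K0 \<le> C ^ L * (1 + b0 * C1 / (C - 1))"
  proof -
    have "b0 * C1 * (C ^ L - 1) / (C - 1) \<le> b0 * C1 * C ^ L / (C - 1)"
      using Cgt bc by (intro divide_right_mono mult_left_mono) auto
    then show ?thesis by (simp add: K0_def B_def algebra_simps)
  qed
  define Uf where "Uf j = (if fst j = 0 then V 0 else Vs (fst j) (snd j))" for j :: "nat \<times> nat"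
  define J where "J = insert (0,0) (SIGMA l:{1..L}. {1..P l})"
  have finJ: "finite J" by (simp add: J_def)
  have Jsum: "(\<Sum>j\<in>J. g j) = g (0,0) + (\<Sum>l\<in>{1..L}. \<Sum>i\<in>{1..P l}. g (l,i))"
    for g :: "nat \<times> nat \<Rightarrow> 'c::comm_monoid_add"
  proof -
    have "(0,0) \<notin> (SIGMA l:{1..L}. {1..P l})" by auto
    then have "(\<Sum>j\<in>J. g j) = g (0,0) + (\<Sum>j\<in>(SIGMA l:{1..L}. {1..P l}). g j)"
      by (simp add: J_def)
    also have "(\<Sum>j\<in>(SIGMA l:{1..L}. {1..P l}). g j) = (\<Sum>l\<in>{1..L}. \<Sum>i\<in>{1..P l}. g (l,i))"
      by (subst sum.Sigma) auto
    finally show ?thesis .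
  qed
  have subU: "subspace (Uf j)" if "j \<in> J" for j
    using that V_sub[of 0] Vs_sub by (auto simp: J_def Uf_def)
  define Pop where "Pop = (\<lambda>v. a_proj a (V 0) v
                   + (\<Sum>l\<in>{1..L}. \<Sum>i\<in>{1..P l}. a_proj a (Vs l i) v))"
  have PopJ: "Pop v = (\<Sum>j\<in>J. a_proj a (Uf j) v)" for v
    unfolding Jsum Pop_def by (simp add: Uf_def)
  have eig: "1 / K0 \<le> t \<and> t \<le> 1 + real k0 * real L" if tE: "t \<in> eigvals Pop" for t
  proof -
    obtain v where v0: "v \<noteq> 0" and ev: "Pop v = t *\<^sub>R v" using tE by (auto simp: eigvals_def)
    have avv: "a v v > 0" using a_pos v0 by simp
    define p where "p j = a_proj a (Uf j) v" for j
    define Q where "Q = (\<Sum>j\<in>J. a (p j) (p j))"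
    have pprop: "p j \<in> Uf j \<and> (\<forall>w\<in>Uf j. a (v - p j) w = 0)" if "j \<in> J" for j
      unfolding p_def using A.proj_prop[OF subU[OF that]] .
    have psq: "a (p j) v = a (p j) (p j)" if "j \<in> J" for j
      unfolding p_def using A.proj_sq[OF subU[OF that]] .
    have "a (Pop v) v = (\<Sum>j\<in>J. a (p j) v)" by (simp add: PopJ A.lsum p_def)
    also have "\<dots> = Q" unfolding Q_def by (rule sum.cong) (auto simp: psq)
    finally have "Q = t * a v v" using ev by (simp add: A.lmul)
    note Qt = this
    have up: "Q \<le> (1 + real k0 * real L) * a v v"
    proof -
      have J0: "(0,0) \<in> J" by (simp add: J_def)
      have b0': "a (p (0,0)) (p (0,0)) \<le> a v v"
      proof -
        have "0 \<le> a (v - p (0,0)) (v - p (0,0))" by (rule A.nonneg)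
        also have "\<dots> = a v v - 2 * a (p (0,0)) v + a (p (0,0)) (p (0,0))"
          by (simp add: A.lsub A.rsub a_sym[of v "p (0,0)"])
        finally show ?thesis using psq[OF J0] by simp
      qed
      have lev: "(\<Sum>i\<in>{1..P l}. a (p (l,i)) (p (l,i))) \<le> real k0 * a v v" if l: "l \<in> {1..L}" for l
      proof (rule A.level_bound[where c = "c l"])
        have lJ: "(l,i) \<in> J" if "i \<in> {1..P l}" for i using l that by (auto simp: J_def)
        have pin: "p (l,i) \<in> Vs l i" if "i \<in> {1..P l}" for i
          using pprop[OF lJ[OF that]] l by (auto simp: Uf_def)
        show "finite {1..P l}" by simp
        show "\<And>i. i \<in> {1..P l} \<Longrightarrow> c l i \<in> {1..k0}" using coloring[of l] l by auto
        show "\<And>i j. i \<in> {1..P l} \<Longrightarrow> j \<in> {1..P l} \<Longrightarrow> i \<noteq> j \<Longrightarrow> c l i = c l j \<Longrightarrow> a (p (l,i)) (p (l,j)) = 0"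
          using coloring[of l] l pin by auto
        show "\<And>i. i \<in> {1..P l} \<Longrightarrow> a (p (l,i)) v = a (p (l,i)) (p (l,i))"
          using psq lJ by auto
      qed
      have "Q = a (p (0,0)) (p (0,0)) + (\<Sum>l\<in>{1..L}. \<Sum>i\<in>{1..P l}. a (p (l,i)) (p (l,i)))"
        unfolding Q_def by (rule Jsum)
      also have "\<dots> \<le> a v v + (\<Sum>l\<in>{1..L}. real k0 * a v v)"
        using b0' lev by (intro add_mono sum_mono) auto
      also have "\<dots> = (1 + real k0 * real L) * a v v" by (simp add: algebra_simps)
      finally show ?thesis .
    qed
    have lo: "a v v \<le> K0 * Q"
    proof -
      obtain v0 w where v0: "v0 \<in> V 0" and wU: "\<forall>l'\<in>{1..L}. \<forall>i\<in>{1..P l'}. w l' i \<in> Vs l' i"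
        and wdec: "v = v0 + (\<Sum>l'\<in>{1..L}. \<Sum>i\<in>{1..P l'}. w l' i)"
        and wb: "a v0 v0 + (\<Sum>l'\<in>{1..L}. \<Sum>i\<in>{1..P l'}. a (w l' i) (w l' i)) \<le> B L * a v v"
        using dec[of L v] V_top by blast
      define x where "x j = (if fst j = 0 then v0 else w (fst j) (snd j))" for j :: "nat \<times> nat"
      show ?thesis unfolding Q_def
      proof (rule A.lower_bound[where x = x and U = Uf])
        show "finite J" by (rule finJ)
        show "\<And>j. j \<in> J \<Longrightarrow> x j \<in> Uf j" using v0 wU by (auto simp: J_def x_def Uf_def)
        show "\<And>j w. j \<in> J \<Longrightarrow> w \<in> Uf j \<Longrightarrow> a (v - p j) w = 0" using pprop by blast
        show "v = (\<Sum>j\<in>J. x j)" unfolding Jsum using wdec by (simp add: x_def)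
        show "(\<Sum>j\<in>J. a (x j) (x j)) \<le> K0 * a v v" unfolding Jsum using wb by (simp add: x_def K0_def)
        show "K0 > 0" by (rule K0pos)
      qed
    qed
    have "1 \<le> K0 * t" using lo Qt avv by (simp add: mult.assoc[symmetric] mult_le_cancel_right2)
    then have t1: "1 / K0 \<le> t" using K0pos by (simp add: field_simps)
    have "t \<le> 1 + real k0 * real L" using up Qt avv by simp
    then show ?thesis using t1 by simp
  qed
  define E where "E = eigvals Pop"
  define M where "M = 1 + real k0 * real L"
  have M1: "M \<ge> 1" by (simp add: M_def)
  have RHS: "M * K0 \<le> C ^ L * (1 + b0 * C1 / (C - 1)) * M"
    using K0le M1 by (simp add: mult.commute)
  have R1: "1 \<le> C ^ L * (1 + b0 * C1 / (C - 1)) * M"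
  proof -
    have "1 * 1 * 1 \<le> C ^ L * (1 + b0 * C1 / (C - 1)) * M"
      using Cl[of L] M1 Cgt bc by (intro mult_mono) auto
    then show ?thesis by simp
  qed
  have "kappa2 Pop \<le> C ^ L * (1 + b0 * C1 / (C - 1)) * M"
  proof (cases "finite E \<and> E \<noteq> {}")
    case True
    have mx: "Max E \<in> E" "Min E \<in> E" using True by auto
    have "Max E / Min E \<le> M / (1 / K0)"
      using eig[of "Max E"] eig[of "Min E"] mx K0pos M1 unfolding E_def M_def
      by (intro frac_le) auto
    also have "\<dots> = M * K0" by simp
    finally show ?thesis using RHS unfolding kappa2_def lambda_max_def lambda_min_def E_def by simp
  next
    case False
    then have "Max E = Min E" by (rule Max_Min_degen)
    then have "Max E / Min E \<le> 1" by simp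
    then show ?thesis using R1 unfolding kappa2_def lambda_max_def lambda_min_def E_def by simp
  qed
  then show ?thesis unfolding Pop_def C_def M_def .
qed

end
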